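(* Let $n\geq 2$ be an integer, let $c,\varepsilon\in[0,1]$, and let $G$ be a connected graph on $n$ vertices. Assume that $G$ contains no empty bipartite graph with sides of size at least $c\cdot n$, i.e. there are no two disjoint vertex sets $X,Y\subseteq V(G)$ with $|X|,|Y|\geq c\cdot n$ such that no edge of $G$ joins a vertex of $X$ to a vertex of $Y$. Assume moreover that every vertex $x$ of $G$ has closed degree $\overline{d(x)}\leq \varepsilon\cdot n$. Then for every vertex $x$ of $G$ there is an induced path on $k$ vertices in $G$ having $x$ as an endpoint, with $k\geq \frac{1}{2(\varepsilon+c)}$.
   Context: All graphs are finite and simple. The closed degree of a vertex $x$ is $\overline{d(x)}=d(x)+1=|N[x]|$, where $N[x]=\{x\}\cup\{y: xy\in E(G)\}$ is the closed neighborhood. An induced path on $k$ vertices ($P_k$) is a set of $k$ vertices $v_1,\dots,v_k$ such that $v_iv_j$ is an edge if and only if $|i-j|=1$; "starting in $x$" means $v_1=x$. *)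

theory Defs
  imports Complex_Main
begin

definition simple_graph :: "'a set \<Rightarrow> ('a \<Rightarrow> 'a \<Rightarrow> bool) \<Rightarrow> bool" where
  "simple_graph V E \<longleftrightarrow> finite V \<and> (\<forall>u v. E u v \<longrightarrow> u \<in> V \<and> v \<in> V)
     \<and> (\<forall>u v. E u v \<longrightarrow> E v u) \<and> (\<forall>u. \<not> E u u)"

definition connected_graph :: "'a set \<Rightarrow> ('a \<Rightarrow> 'a \<Rightarrow> bool) \<Rightarrow> bool" where
  "connected_graph V E \<longleftrightarrow> (\<forall>u\<in>V. \<forall>v\<in>V. (u, v) \<in> {(a, b). E a b}\<^sup>*)"

definition closed_nbhd :: "'a set \<Rightarrow> ('a \<Rightarrow> 'a \<Rightarrow> bool) \<Rightarrow> 'a \<Rightarrow> 'a set" where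
  "closed_nbhd V E x = insert x {y \<in> V. E x y}"

definition closed_degree :: "'a set \<Rightarrow> ('a \<Rightarrow> 'a \<Rightarrow> bool) \<Rightarrow> 'a \<Rightarrow> nat" where
  "closed_degree V E x = card (closed_nbhd V E x)"

definition induced_path_from :: "'a set \<Rightarrow> ('a \<Rightarrow> 'a \<Rightarrow> bool) \<Rightarrow> 'a \<Rightarrow> 'a list \<Rightarrow> bool" where
  "induced_path_from V E x vs \<longleftrightarrow> vs \<noteq> [] \<and> hd vs = x \<and> distinct vs \<and> set vs \<subseteq> V
     \<and> (\<forall>i<length vs. \<forall>j<length vs. E (vs ! i) (vs ! j) \<longleftrightarrow> (i = j + 1 \<or> j = i + 1))"

definition has_empty_bipartite :: "'a set \<Rightarrow> ('a \<Rightarrow> 'a \<Rightarrow> bool) \<Rightarrow> real \<Rightarrow> bool" where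
  "has_empty_bipartite V E s \<longleftrightarrow> (\<exists>X Y. X \<subseteq> V \<and> Y \<subseteq> V \<and> X \<inter> Y = {}
     \<and> real (card X) \<ge> s \<and> real (card Y) \<ge> s \<and> (\<forall>x\<in>X. \<forall>y\<in>Y. \<not> E x y))"

end

theory Submission imports Defs begin

definition clin :: "('a\<Rightarrow>'a\<Rightarrow>bool) \<Rightarrow> 'a set \<Rightarrow> 'a set \<Rightarrow> bool" where
  "clin E R T \<longleftrightarrow> T \<subseteq> R \<and> (\<forall>a\<in>T. \<forall>b\<in>R-T. \<not> E a b)"

definition conn :: "('a\<Rightarrow>'a\<Rightarrow>bool) \<Rightarrow> 'a set \<Rightarrow> bool" where
  "conn E S \<longleftrightarrow> (\<forall>T. T \<subseteq> S \<longrightarrow> T \<noteq> {} \<longrightarrow> T \<noteq> S \<longrightarrow> (\<exists>a\<in>T. \<exists>b\<in>S-T. E a b))"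

lemma min_closed:
  assumes "finite R"
  shows "clin E R T \<Longrightarrow> T \<noteq> {} \<Longrightarrow> \<exists>K. clin E R K \<and> K \<subseteq> T \<and> K \<noteq> {} \<and> conn E K"
proof (induction "card T" arbitrary: T rule: less_induct)
  case less
  show ?case
  proof (cases "conn E T")
    case True
    then show ?thesis using less.prems by blast
  next
    case False
    then obtain T' where T': "T' \<subseteq> T" "T' \<noteq> {}" "T' \<noteq> T" "\<forall>a\<in>T'. \<forall>b\<in>T-T'. \<not> E a b"
      unfolding conn_def by blast
    have cl: "clin E R T'" using less.prems(1) T' unfolding clin_def by blast
    have fT: "finite T" using less.prems(1) assms unfolding clin_def by (meson finite_subset)
    have "card T' < card T" using T' fT by (meson psubsetI psubset_card_mono)
    from less.hyps[OF this cl T'(2)] T'(1) show ?thesis by blast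
  qed
qed

lemma big_comp:
  assumes sg: "simple_graph V E" and nb: "\<not> has_empty_bipartite V E s"
    and RV: "R \<subseteq> V" and Rne: "R \<noteq> {}"
  shows "\<exists>K. clin E R K \<and> K \<noteq> {} \<and> conn E K \<and> real (card K) \<ge> real (card R) - 2 * s"
proof -
  have fV: "finite V" and sym: "\<And>a b. E a b \<Longrightarrow> E b a" using sg unfolding simple_graph_def by auto
  have fR: "finite R" using fV RV finite_subset by blast
  have clR: "clin E R R" unfolding clin_def by auto
  show ?thesis
  proof (cases "real (card R) < s")
    case True
    obtain K where "clin E R K" "K \<noteq> {}" "conn E K" using min_closed[OF fR clR Rne] by blast
    then show ?thesis using True by (intro exI[of _ K]) auto
  next
    case False
    let ?P = "\<lambda>X. clin E R X \<and> real (card X) \<ge> s"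
    have "?P R" using False clR by auto
    from ex_has_least_nat[of ?P R card, OF \<open>?P R\<close>] obtain X where
      X: "?P X" and Xmin: "\<And>Y. ?P Y \<Longrightarrow> card X \<le> card Y" by blast
    have XR: "X \<subseteq> R" using X unfolding clin_def by auto
    have fX: "finite X" using fR XR finite_subset by blast
    have Xne: "X \<noteq> {}"
    proof
      assume "X = {}"
      then have "s \<le> 0" using X by auto
      then have "has_empty_bipartite V E s" unfolding has_empty_bipartite_def
        by (intro exI[of _ "{}"]) auto
      then show False using nb by blast
    qed
    obtain K where K: "clin E R K" "K \<subseteq> X" "K \<noteq> {}" "conn E K"
      using min_closed[OF fR _ Xne] X by blast
    have "clin E R (X - K)" using X K(1) XR sym unfolding clin_def by blast
    moreover have "card (X - K) < card X" using K(2,3) fX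
      by (metis Diff_subset card_seteq not_le Diff_eq_empty_iff double_diff order_refl psubsetI psubset_card_mono)
    ultimately have "real (card (X - K)) < s" using Xmin by force
    moreover have "card X = card (X - K) + card K" using K(2) fX
      by (metis card_Diff_subset finite_subset le_add_diff_inverse2 card_mono)
    moreover have "real (card (R - X)) < s"
    proof (rule ccontr)
      assume "\<not> real (card (R - X)) < s"
      then have "has_empty_bipartite V E s" unfolding has_empty_bipartite_def
        using X XR RV unfolding clin_def
        by (intro exI[of _ X] exI[of _ "R - X"]) auto
      then show False using nb by blast
    qed
    moreover have "card R = card X + card (R - X)" using XR fR
      by (metis card_Diff_subset finite_subset le_add_diff_inverse card_mono)
    ultimately show ?thesis using K by (intro exI[of _ K]) auto
  qed
qed


definition pinv :: "'a set \<Rightarrow> ('a\<Rightarrow>'a\<Rightarrow>bool) \<Rightarrow> 'a list \<Rightarrow> 'a set \<Rightarrow> bool" where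
  "pinv V E vs C \<longleftrightarrow> C \<subseteq> V \<and> last vs \<notin> C \<and> (\<forall>y\<in>C. \<forall>v\<in>set (butlast vs). \<not> E v y \<and> y \<noteq> v)
     \<and> conn E (insert (last vs) C)"

lemma path_ext:
  assumes sg: "simple_graph V E" and P: "induced_path_from V E x vs"
    and uV: "u \<in> V" and adj: "E (last vs) u" and nb: "\<forall>w\<in>set (butlast vs). \<not> E w u \<and> u \<noteq> w"
  shows "induced_path_from V E x (vs @ [u])"
proof -
  have sym: "\<And>a b. E a b \<Longrightarrow> E b a" and irr: "\<And>a. \<not> E a a" using sg unfolding simple_graph_def by auto
  have ne: "vs \<noteq> []" and hd: "hd vs = x" and dist: "distinct vs" and sV: "set vs \<subseteq> V"
    and ind: "\<forall>i<length vs. \<forall>j<length vs. E (vs ! i) (vs ! j) \<longleftrightarrow> (i = j + 1 \<or> j = i + 1)"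
    using P unfolding induced_path_from_def by auto
  have sv: "set vs = insert (last vs) (set (butlast vs))" using ne
    by (metis append_butlast_last_id list.simps(15) rotate1.simps(2) set_rotate1)
  have "u \<noteq> last vs" using adj irr by metis
  then have unot: "u \<notin> set vs" using nb sv by auto
  let ?k = "length vs"
  have key: "\<And>j. j < ?k \<Longrightarrow> E u (vs ! j) \<longleftrightarrow> j + 1 = ?k"
  proof -
    fix j assume j: "j < ?k"
    show "E u (vs ! j) \<longleftrightarrow> j + 1 = ?k"
    proof (cases "j + 1 = ?k")
      case True
      then have "vs ! j = last vs" using ne by (metis diff_add_inverse2 last_conv_nth)
      then show ?thesis using True adj sym by auto
    next
      case False
      then have "j < length (butlast vs)" using j by simp
      then have "vs ! j \<in> set (butlast vs)" by (metis nth_butlast nth_mem)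
      then show ?thesis using False nb sym by blast
    qed
  qed
  have "\<forall>i<length (vs@[u]). \<forall>j<length (vs@[u]). E ((vs@[u]) ! i) ((vs@[u]) ! j) \<longleftrightarrow> (i = j + 1 \<or> j = i + 1)"
  proof (intro allI impI)
    fix i j assume i: "i < length (vs@[u])" and j: "j < length (vs@[u])"
    show "E ((vs@[u]) ! i) ((vs@[u]) ! j) \<longleftrightarrow> (i = j + 1 \<or> j = i + 1)"
    proof (cases "i < ?k")
      case ik: True
      show ?thesis
      proof (cases "j < ?k")
        case True then show ?thesis using ik ind by (simp add: nth_append)
      next
        case False
        then have "j = ?k" using j by simp
        then show ?thesis using ik key[OF ik] sym by (auto simp: nth_append)
      qed
    next
      case False
      then have iK: "i = ?k" using i by simp
      show ?thesis
      proof (cases "j < ?k")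
        case True then show ?thesis using iK key[OF True] by (auto simp: nth_append)
      next
        case False
        then have "j = ?k" using j by simp
        then show ?thesis using iK irr by (simp add: nth_append)
      qed
    qed
  qed
  then show ?thesis unfolding induced_path_from_def using ne hd dist sV uV unot by auto
qed

lemma nbhd_card:
  assumes sg: "simple_graph V E" and vC: "v \<notin> C"
  shows "card {y\<in>C. E v y} + 1 \<le> closed_degree V E v"
proof -
  have fV: "finite V" and inV: "\<And>a b. E a b \<Longrightarrow> b \<in> V" and irr: "\<not> E v v"
    using sg unfolding simple_graph_def by auto
  have f: "finite {y\<in>V. E v y}" using fV by auto
  have "card {y\<in>C. E v y} \<le> card {y\<in>V. E v y}" using f inV by (intro card_mono) auto
  moreover have "closed_degree V E v = card {y\<in>V. E v y} + 1"
    unfolding closed_degree_def closed_nbhd_def using f irr by simp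
  ultimately show ?thesis by simp
qed

lemma step:
  assumes sg: "simple_graph V E" and nbip: "\<not> has_empty_bipartite V E s" and s0: "s \<ge> 0"
    and P: "induced_path_from V E x vs" and I: "pinv V E vs C" and Cne: "C \<noteq> {}"
    and deg: "real (closed_degree V E (last vs)) \<le> d"
  shows "\<exists>u C'. induced_path_from V E x (vs @ [u]) \<and> pinv V E (vs @ [u]) C' \<and> card C' < card C
            \<and> real (card C') \<ge> real (card C) - (d + 2 * s)"
proof -
  have sym: "\<And>a b. E a b \<Longrightarrow> E b a" and fV: "finite V" using sg unfolding simple_graph_def by auto
  let ?v = "last vs"
  have CV: "C \<subseteq> V" and vC: "?v \<notin> C" and nbC: "\<forall>y\<in>C. \<forall>w\<in>set (butlast vs). \<not> E w y \<and> y \<noteq> w"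
    and cn: "conn E (insert ?v C)" using I unfolding pinv_def by auto
  have fC: "finite C" using CV fV finite_subset by blast
  have ne: "vs \<noteq> []" using P unfolding induced_path_from_def by auto
  have "butlast (vs @ [u]) = vs" for u :: 'a by simp
  have sv: "set vs = insert (last vs) (set (butlast vs))" using ne
    by (metis append_butlast_last_id list.simps(15) rotate1.simps(2) set_rotate1)
  obtain b0 where b0: "b0 \<in> C" "E ?v b0"
  proof -
    have "{?v} \<noteq> insert ?v C" using Cne vC by auto
    then have "\<exists>a\<in>{?v}. \<exists>b\<in>insert ?v C - {?v}. E a b" using cn unfolding conn_def by blast
    then show ?thesis using that by blast
  qed
  let ?N = "{y\<in>C. E ?v y}"
  let ?R = "C - ?N"
  have Ncard: "real (card ?N) + 1 \<le> d" using nbhd_card[OF sg vC] deg by linarith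
  have NC: "?N \<subseteq> C" by auto
  have cardR: "card C = card ?N + card ?R"
    using card_Diff_subset[OF finite_subset[OF NC fC] NC] card_mono[OF fC NC] by simp
  have newpath: "induced_path_from V E x (vs @ [u])" if "u \<in> C" "E ?v u" for u
    using path_ext[OF sg P _ that(2)] that(1) CV nbC by blast
  show ?thesis
  proof (cases "?R = {}")
    case True
    have "pinv V E (vs @ [b0]) {}" unfolding pinv_def conn_def by auto
    moreover have "card C = card ?N" using True cardR by (metis add_0_right card.empty)
    ultimately show ?thesis using newpath[OF b0] b0 fC s0 Ncard Cne
      by (intro exI[of _ b0] exI[of _ "{}"]) (auto simp: card_gt_0_iff)
  next
    case False
    obtain K where K: "clin E ?R K" "K \<noteq> {}" "conn E K" "real (card K) \<ge> real (card ?R) - 2 * s"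
      using big_comp[OF sg nbip _ False] CV by blast
    have KR: "K \<subseteq> ?R" using K(1) unfolding clin_def by auto
    obtain a u where au: "a \<in> K" "u \<in> insert ?v C - K" "E a u"
    proof -
      have "K \<subseteq> insert ?v C" "K \<noteq> insert ?v C" using KR vC by auto
      then show ?thesis using cn K(2) that unfolding conn_def by blast
    qed
    have "u \<noteq> ?v" using au KR sym by auto
    moreover have "u \<notin> ?R - K" using au K(1) unfolding clin_def by blast
    ultimately have uN: "u \<in> C" "E ?v u" using au by auto
    have uK: "u \<notin> K" using au by auto
    have cK: "conn E (insert u K)"
      unfolding conn_def
    proof (intro allI impI)
      fix T assume T: "T \<subseteq> insert u K" "T \<noteq> {}" "T \<noteq> insert u K"
      show "\<exists>a\<in>T. \<exists>b\<in>insert u K - T. E a b"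
      proof (cases "u \<in> T")
        case True
        show ?thesis
        proof (cases "T \<inter> K = {}")
          case True
          then have "T = {u}" using T \<open>u \<in> T\<close> by auto
          then show ?thesis using au uK sym by auto
        next
          case False
          have "T \<inter> K \<noteq> K" using T True by auto
          then obtain a' b' where "a' \<in> T \<inter> K" "b' \<in> K - T \<inter> K" "E a' b'"
            using K(3) False unfolding conn_def by (metis inf_le2)
          then show ?thesis by auto
        qed
      next
        case False
        then have TK: "T \<subseteq> K" using T by auto
        show ?thesis
        proof (cases "T = K")
          case True then show ?thesis using au False by auto
        next
          case False
          then obtain a' b' where "a' \<in> T" "b' \<in> K - T" "E a' b'"
            using K(3) TK T(2) unfolding conn_def by blast
          then show ?thesis by auto
        qed
      qed
    qed
    have "pinv V E (vs @ [u]) K"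
      unfolding pinv_def using KR CV uK cK nbC sv vC by fastforce
    moreover have "card K < card C"
    proof -
      have "K \<subseteq> C - {u}" using KR uK by auto
      then have "card K \<le> card (C - {u})" using fC by (intro card_mono) auto
      also have "\<dots> < card C" using uN(1) fC by (metis card_Diff1_less)
      finally show ?thesis .
    qed
    moreover have "real (card K) \<ge> real (card C) - (d + 2 * s)"
      using K(4) cardR Ncard by simp
    ultimately show ?thesis using newpath[OF uN] by blast
  qed
qed


lemma grow:
  assumes sg: "simple_graph V E" and nbip: "\<not> has_empty_bipartite V E s" and s0: "s \<ge> 0"
    and deg: "\<forall>y\<in>V. real (closed_degree V E y) \<le> d" and L: "L = d + 2 * s" "L > 0"
  shows "induced_path_from V E x vs \<Longrightarrow> pinv V E vs C \<Longrightarrow>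
    \<exists>ws. induced_path_from V E x ws \<and> real (length ws) \<ge> real (length vs) + real (card C) / L"
proof (induction "card C" arbitrary: vs C rule: less_induct)
  case less
  show ?case
  proof (cases "C = {}")
    case True then show ?thesis using less.prems by (intro exI[of _ vs]) auto
  next
    case False
    have "last vs \<in> V" using less.prems(1) unfolding induced_path_from_def
      by (metis last_in_set subsetD)
    then have "real (closed_degree V E (last vs)) \<le> d" using deg by auto
    from step[OF sg nbip s0 less.prems False this] obtain u C' where
      uC: "induced_path_from V E x (vs @ [u])" "pinv V E (vs @ [u]) C'" "card C' < card C"
        "real (card C') \<ge> real (card C) - L" using L by auto
    from less.hyps[OF uC(3) uC(1,2)] obtain ws where
      ws: "induced_path_from V E x ws" "real (length ws) \<ge> real (length (vs@[u])) + real (card C') / L"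
      by blast
    have "real (card C') / L \<ge> (real (card C) - L) / L" using uC(4) L(2) by (simp add: divide_right_mono)
    also have "(real (card C) - L) / L = real (card C) / L - 1" using L(2) by (simp add: diff_divide_distrib)
    finally show ?thesis using ws by (intro exI[of _ ws]) auto
  qed
qed

theorem theorem3:
  fixes V :: "'a set" and E :: "'a \<Rightarrow> 'a \<Rightarrow> bool" and n :: nat and c \<epsilon> :: real
  assumes "n \<ge> 2"
    and "0 \<le> c" "c \<le> 1" "0 \<le> \<epsilon>" "\<epsilon> \<le> 1"
    and "simple_graph V E" "card V = n" "connected_graph V E"
    and "\<not> has_empty_bipartite V E (c * real n)"
    and "\<forall>x\<in>V. real (closed_degree V E x) \<le> \<epsilon> * real n"
  shows "\<forall>x\<in>V. \<exists>vs. induced_path_from V E x vs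
           \<and> real (length vs) \<ge> 1 / (2 * (\<epsilon> + c))"
proof
  fix x assume xV: "x \<in> V"
  note sg = assms(6)
  have fV: "finite V" and inV: "\<And>a b. E a b \<Longrightarrow> a \<in> V \<and> b \<in> V" using sg unfolding simple_graph_def by auto
  have "closed_degree V E x \<ge> 1" unfolding closed_degree_def closed_nbhd_def using fV
    by (simp add: card_gt_0_iff Suc_le_eq)
  then have en: "\<epsilon> * real n \<ge> 1" using assms(10) xV by fastforce
  define L where "L = \<epsilon> * real n + 2 * (c * real n)"
  have s0: "c * real n \<ge> 0" using assms(2) by simp
  have Lpos: "L \<ge> 1" using en s0 unfolding L_def by linarith
  have P0: "induced_path_from V E x [x]" unfolding induced_path_from_def using xV sg
    unfolding simple_graph_def by auto
  have connV: "conn E V" unfolding conn_def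
  proof (intro allI impI)
    fix T assume T: "T \<subseteq> V" "T \<noteq> {}" "T \<noteq> V"
    obtain a where a: "a \<in> T" using T by auto
    obtain b where b: "b \<in> V" "b \<notin> T" using T by auto
    show "\<exists>a\<in>T. \<exists>b\<in>V-T. E a b"
    proof (rule ccontr)
      assume no: "\<not> ?thesis"
      have "(a, b) \<in> {(p, q). E p q}\<^sup>*" using assms(8) a b T unfolding connected_graph_def by blast
      then have "b \<in> T"
      proof (induction rule: rtrancl_induct)
        case base then show ?case using a .
      next
        case (step y z) then show ?case using no inV by blast
      qed
      then show False using b by simp
    qed
  qed
  have I0: "pinv V E [x] (V - {x})" unfolding pinv_def using connV xV
    by (simp add: insert_absorb)
  obtain ws where ws: "induced_path_from V E x ws"
    "real (length ws) \<ge> real (length [x]) + real (card (V - {x})) / L"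
    using grow[OF sg assms(9) s0 assms(10) L_def _ P0 I0] Lpos by auto
  have cV: "real (card (V - {x})) = real n - 1" using xV fV assms(7) assms(1) by (simp add: of_nat_diff)
  have "1 / (2 * (\<epsilon> + c)) = real n / (2 * (\<epsilon> * real n + c * real n))"
  proof -
    have "2 * (\<epsilon> * real n + c * real n) = real n * (2 * (\<epsilon> + c))" by (simp add: algebra_simps)
    moreover have "real n \<noteq> 0" using assms(1) by simp
    ultimately show ?thesis by simp
  qed
  also have "\<dots> \<le> real n / L"
  proof (rule divide_left_mono)
    show "L \<le> 2 * (\<epsilon> * real n + c * real n)" unfolding L_def using en by (simp add: algebra_simps)
    show "0 \<le> real n" by simp
    have "2 * (\<epsilon> * real n + c * real n) > 0" using en s0 by (smt (verit))
    then show "0 < 2 * (\<epsilon> * real n + c * real n) * L" using Lpos by simp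
  qed
  also have "\<dots> = 1 / L + (real n - 1) / L" by (simp add: diff_divide_distrib)
  also have "\<dots> \<le> 1 + (real n - 1) / L" using Lpos by simp
  finally show "\<exists>vs. induced_path_from V E x vs \<and> real (length vs) \<ge> 1 / (2 * (\<epsilon> + c))"
    using ws cV by (intro exI[of _ ws]) auto
qed

end
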